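(* For every integer $d\ge2$ there exists a simply connected domain $\Omega_+\subset\mathbb C$ with boundary $\Gamma^\perp=\partial\Omega_+$ such that: (i) $\Omega_+$ contains $\{x\in\mathbb R:x>-d^{-1}\}$; (ii) $\Gamma^\perp=\Gamma^\perp_{\rm up}\cup\Gamma^\perp_{\rm down}$, where $\Gamma^\perp_{\rm up}$ is a curve from the point $-d^{-1}$ to infinity lying in the upper half-plane except for its endpoint $-d^{-1}$, and $\Gamma^\perp_{\rm down}=\{\bar w:w\in\Gamma^\perp_{\rm up}\}$; (iii) the map $w\mapsto w(w+1)^{d-1}$ is a bijection from $\Omega_+$ onto $\mathbb C\setminus(-\infty,-(r^{\rm sf})^d]$, where $r^{\rm sf}=d^{-1/d}(1-d^{-1})^{1-1/d}$; (iv) the map $w\mapsto w(w+1)^{d-1}$ is a bijection from $\Gamma^\perp_{\rm up}$ onto $(-\infty,-(r^{\rm sf})^d]$; (v) if $w\in\Omega_+\cup\Gamma^\perp$ then $w+c\in\Omega_+$ for every constant $c>0$. *)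

theory Defs
  imports "HOL-Analysis.Analysis"
begin

definition sf_map :: "nat \<Rightarrow> complex \<Rightarrow> complex" where
  "sf_map d w = w * (w + 1) ^ (d - 1)"

definition r_sf :: "nat \<Rightarrow> real" where
  "r_sf d = real d powr (- 1 / real d) * (1 - 1 / real d) powr (1 - 1 / real d)"

end

theory Submission
  imports Defs
begin

lemma Arg_upper:
  assumes "0 < Im z"
  shows "Arg z = pi/2 - arctan (Re z / Im z)"
proof -
  have z: "z \<noteq> 0" using assms by auto
  have A: "Arg z = Im (Ln z)" using Arg_eq_Im_Ln z by blast
  consider "Re z > 0" | "Re z < 0" | "Re z = 0" by linarith
  then show ?thesis
  proof cases
    case 1
    have "arctan (Im z / Re z) = pi/2 - arctan (Re z / Im z)"
      using arctan_inverse[of "Im z / Re z"] 1 assms by (simp add: inverse_eq_divide)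
    then show ?thesis using A Im_Ln_eq[OF z] 1 by simp
  next
    case 2
    have "- Im z / Re z > 0" using 2 assms by (simp add: divide_pos_neg)
    then have "arctan (- Im z / Re z) = pi/2 - arctan (- Re z / Im z)"
      using arctan_inverse[of "- Im z / Re z"] by (simp add: inverse_eq_divide)
    then have "arctan (Im z / Re z) + pi = pi/2 - arctan (Re z / Im z)"
      by (simp add: arctan_minus)
    then show ?thesis using A Im_Ln_eq[OF z] 2 assms by simp
  next
    case 3
    then show ?thesis using A Im_Ln_eq[OF z] assms by simp
  qed
qed

lemma Arg_upper_neg:
  assumes "0 < Im z" "Re z < 0"
  shows "Arg z = pi - arctan (Im z / - Re z)"
proof -
  have pos: "Im z / - Re z > 0" using assms by (intro divide_pos_pos) auto
  have "arctan (inverse (Im z / - Re z)) = pi/2 - arctan (Im z / - Re z)"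
    using pos by (intro arctan_inverse)
  then have "arctan (- Re z / Im z) = pi/2 - arctan (Im z / - Re z)"
    by (simp add: inverse_eq_divide)
  moreover have "arctan (Re z / Im z) = - arctan (- Re z / Im z)"
    by (simp add: arctan_minus)
  ultimately show ?thesis using Arg_upper[OF assms(1)] by simp
qed

lemma Arg_upper_pos:
  assumes "0 < Im z" "Re z > 0"
  shows "Arg z = arctan (Im z / Re z)"
  using arg_conv_arctan assms(2) by blast

lemma Arg_shift:
  assumes "0 < Im z" "0 < c"
  shows "Arg (z + of_real c) < Arg z"
proof -
  have "Re z / Im z < (Re z + c) / Im z" using assms by (simp add: divide_strict_right_mono)
  then have "arctan (Re z / Im z) < arctan ((Re z + c) / Im z)" by (simp add: arctan_less_iff)
  then show ?thesis using Arg_upper[OF assms(1)] Arg_upper[of "z + of_real c"] assms by simp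
qed

lemma Arg_pos_of_real: "0 < r \<Longrightarrow> -pi < x \<Longrightarrow> x \<le> pi \<Longrightarrow> Arg (cis x * complex_of_real r) = x"
  by (simp add: Arg_cis)

lemma cis_sin_identity:
  "cis b * complex_of_real (sin a) + complex_of_real (sin (b - a)) = cis a * complex_of_real (sin b)"
  by (simp add: complex_eq_iff sin_diff algebra_simps)

definition phi :: "nat \<Rightarrow> complex \<Rightarrow> real" where
  "phi d w = Arg w + real (d - 1) * Arg (w + 1)"

definition Wf :: "nat \<Rightarrow> real \<Rightarrow> real \<Rightarrow> complex" where
  "Wf d a p = cis (p - real (d - 1) * a) * complex_of_real (sin a / sin (p - real d * a))"

definition Mf :: "nat \<Rightarrow> real \<Rightarrow> real \<Rightarrow> real" where
  "Mf d p a = sin a * sin (p - real (d - 1) * a) ^ (d - 1) / sin (p - real d * a) ^ d"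

lemma Wf_plus1:
  assumes "1 \<le> d" "sin (p - real d * a) \<noteq> 0"
  shows "Wf d a p + 1 = cis a * complex_of_real (sin (p - real (d - 1) * a) / sin (p - real d * a))"
proof -
  define b where "b = p - real (d - 1) * a"
  have c: "p - real d * a = b - a" using assms(1) by (simp add: b_def of_nat_diff algebra_simps)
  have s: "complex_of_real (sin (b - a)) \<noteq> 0" using assms c by simp
  have W: "Wf d a p = cis b * complex_of_real (sin a) / complex_of_real (sin (b - a))"
    unfolding Wf_def c b_def[symmetric] by simp
  have "Wf d a p + 1 = (cis b * complex_of_real (sin a) + complex_of_real (sin (b - a))) / complex_of_real (sin (b - a))"
    unfolding W using s by (simp add: field_simps)
  also have "\<dots> = cis a * complex_of_real (sin b) / complex_of_real (sin (b - a))"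
    by (simp only: cis_sin_identity)
  finally show ?thesis unfolding c b_def[symmetric] by simp
qed

lemma sf_map_Wf:
  assumes "1 \<le> d" "sin (p - real d * a) \<noteq> 0"
  shows "sf_map d (Wf d a p) = cis p * complex_of_real (Mf d p a)"
proof -
  obtain n where n: "d = Suc n" using assms(1) by (cases d) auto
  define b where "b = p - real n * a"
  define c where "c = p - real d * a"
  have sc: "sin c \<noteq> 0" using assms c_def by simp
  have W: "Wf d a p = cis b * complex_of_real (sin a / sin c)" unfolding Wf_def b_def c_def n by simp
  have W1: "Wf d a p + 1 = cis a * complex_of_real (sin b / sin c)"
    using Wf_plus1[OF assms] unfolding b_def c_def n by simp
  have "sf_map d (Wf d a p) = Wf d a p * (Wf d a p + 1) ^ n" by (simp add: sf_map_def n)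
  also have "\<dots> = cis b * complex_of_real (sin a / sin c) * (cis a * complex_of_real (sin b / sin c)) ^ n"
    by (metis W W1)
  also have "\<dots> = (cis b * cis a ^ n) * complex_of_real (sin a * (sin b) ^ n / (sin c ^ n * sin c))"
    by (simp add: power_mult_distrib power_divide field_simps)
  also have "cis b * cis a ^ n = cis p" by (simp add: Complex.DeMoivre cis_mult b_def)
  also have "sin a * (sin b) ^ n / (sin c ^ n * sin c) = Mf d p a"
    unfolding Mf_def n b_def c_def by (simp add: mult.commute)
  finally show ?thesis .
qed

lemma law_of_sines:
  assumes "0 < Im w"
  shows "0 < Arg (w + 1) \<and> Arg (w + 1) < Arg w \<and> Arg w < pi \<and>
         w = cis (Arg w) * complex_of_real (sin (Arg (w + 1)) / sin (Arg w - Arg (w + 1)))"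
proof -
  define a where "a = Arg (w + 1)"
  define b where "b = Arg w"
  have a0: "0 < a" "a < pi" using Arg_lt_pi[of "w+1"] assms by (auto simp: a_def)
  have b0: "0 < b" "b < pi" using Arg_lt_pi[of "w"] assms by (auto simp: b_def)
  have ab: "a < b"
    using Arg_shift[OF assms, of 1] by (simp add: a_def b_def)
  have sba: "sin (b - a) > 0" using ab a0 b0 by (intro sin_gt_zero) auto
  define R0 where "R0 = cmod w"
  define R1 where "R1 = cmod (w + 1)"
  have w: "w = complex_of_real R0 * cis b" using rcis_cmod_Arg[of w] by (simp add: rcis_def R0_def b_def)
  have w1: "w + 1 = complex_of_real R1 * cis a" using rcis_cmod_Arg[of "w+1"] by (simp add: rcis_def R1_def a_def)
  have "complex_of_real R1 * cis a - complex_of_real R0 * cis b = 1" using w w1 by (metis add_diff_cancel_left')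
  then have e1: "R1 * cos a - R0 * cos b = 1" and e2: "R1 * sin a - R0 * sin b = 0"
    by (auto simp: complex_eq_iff)
  have "R0 * sin (b - a) = sin a"
  proof -
    have "sin a * (R1 * cos a - R0 * cos b) - cos a * (R1 * sin a - R0 * sin b) = sin a"
      using e1 e2 by simp
    then show ?thesis by (simp add: sin_diff algebra_simps)
  qed
  then have "R0 = sin a / sin (b - a)" using sba by (simp add: field_simps)
  then have "w = cis b * complex_of_real (sin a / sin (b - a))" using w by (simp add: mult.commute)
  then show ?thesis using a0 b0 ab by (simp add: a_def b_def)
qed

lemma Wf_props:
  assumes d: "2 \<le> d" and a: "0 < a" and ap: "real d * a < p" and p: "p \<le> pi"
  shows "0 < Im (Wf d a p) \<and> Arg (Wf d a p) = p - real (d - 1) * a \<and>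
         Arg (Wf d a p + 1) = a \<and> phi d (Wf d a p) = p \<and> 0 < Mf d p a"
proof -
  obtain n where n: "d = Suc n" "1 \<le> n" using d by (cases d) auto
  define b where "b = p - real n * a"
  define c where "c = p - real d * a"
  have cb: "c = b - a" by (simp add: b_def c_def n algebra_simps)
  have "real d * a > 0" using a d by simp
  then have c0: "0 < c" "c < pi" using ap p by (auto simp: c_def)
  have a1: "a < pi"
  proof -
    have "real d * a \<ge> 2 * a" using d a by (intro mult_right_mono) auto
    then show ?thesis using ap p a by linarith
  qed
  have b0: "0 < b" "b < pi"
  proof -
    show "0 < b" using cb c0 a by linarith
    have "real n * a > 0" using n a by simp
    then show "b < pi" using p by (simp add: b_def)
  qed
  have sa: "sin a > 0" using a a1 by (intro sin_gt_zero) auto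
  have sb: "sin b > 0" using b0 by (intro sin_gt_zero) auto
  have sc: "sin c > 0" using c0 by (intro sin_gt_zero) auto
  have W: "Wf d a p = cis b * complex_of_real (sin a / sin c)" unfolding Wf_def b_def c_def n by simp
  have W1: "Wf d a p + 1 = cis a * complex_of_real (sin b / sin c)"
    using Wf_plus1[of d p a] sc n unfolding b_def c_def by simp
  have r1: "sin a / sin c > 0" and r2: "sin b / sin c > 0" using sa sb sc by auto
  have A1: "Arg (Wf d a p) = b" unfolding W by (rule Arg_pos_of_real) (use r1 b0 in auto)
  have A2: "Arg (Wf d a p + 1) = a" unfolding W1 by (rule Arg_pos_of_real) (use r2 a a1 in auto)
  have I: "0 < Im (Wf d a p)" unfolding W using sa sb sc by simp
  have M: "0 < Mf d p a" unfolding Mf_def using sa sb sc n by (simp add: b_def c_def)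
  show ?thesis using A1 A2 I M by (simp add: phi_def b_def n)
qed

lemma Mf_ident:
  fixes sa ca sc cc n :: real
  shows "ca * (sa * cc + ca * sc) * sc - n\<^sup>2 * (ca * cc - sa * sc) * sa * sc
          + (n + 1)\<^sup>2 * cc * sa * (sa * cc + ca * sc)
        = (ca * sc + (n + 1) * cc * sa)\<^sup>2 + n\<^sup>2 * sa\<^sup>2 * sc\<^sup>2"
  by (simp add: power2_eq_square algebra_simps)

lemma Mf_strict_mono:
  assumes d: "2 \<le> d" and p: "0 < p" "p \<le> pi" and a: "0 < a1" "a1 < a2" "real d * a2 < p"
  shows "Mf d p a1 < Mf d p a2"
proof -
  obtain n where n: "d = Suc n" "1 \<le> n" using d by (cases d) auto
  define L where "L a = ln (sin a) + real n * ln (sin (p - real n * a)) - real d * ln (sin (p - real d * a))" for a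
  have good: "sin a > 0 \<and> sin (p - real n * a) > 0 \<and> sin (p - real d * a) > 0" if "0 < a" "real d * a < p" for a
  proof -
    have "real d * a > 0" using that d by simp
    then have c0: "0 < p - real d * a" "p - real d * a < pi" using that p by auto
    have "real d * a \<ge> 2 * a" using d that by (intro mult_right_mono) auto
    then have a1: "a < pi" using that p by linarith
    have "real n * a > 0" using n that by simp
    then have b0: "0 < p - real n * a" "p - real n * a < pi" using c0 that p by (auto simp: n algebra_simps)
    show ?thesis using c0 a1 b0 that by (auto intro!: sin_gt_zero)
  qed
  have Mexp: "Mf d p a = exp (L a)" if "0 < a" "real d * a < p" for a
  proof -
    have g: "sin a > 0" "sin (p - real n * a) > 0" "sin (p - real d * a) > 0" using good[OF that] by auto
    have "exp (L a) = sin a * exp (ln (sin (p - real n * a))) ^ n / exp (ln (sin (p - real d * a))) ^ d"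
      unfolding L_def using g by (simp add: exp_diff exp_add exp_of_nat_mult)
    also have "\<dots> = Mf d p a" using g by (simp add: Mf_def n)
    finally show ?thesis by simp
  qed
  have der: "\<exists>y. DERIV L x :> y \<and> y > 0" if "a1 \<le> x" "x \<le> a2" for x
  proof -
    have x: "0 < x" "real d * x < p" using that a
      by (auto intro: order.strict_trans1[OF mult_left_mono[of x a2 "real d"]])
    define sa where "sa = sin x"
    define ca where "ca = cos x"
    define c where "c = p - real d * x"
    define sc where "sc = sin c"
    define cc where "cc = cos c"
    have bx: "p - real n * x = x + c" by (simp add: c_def n algebra_simps)
    define sb where "sb = sin (x + c)"
    define cb where "cb = cos (x + c)"
    have g: "sa > 0" "sb > 0" "sc > 0" using good[OF x] bx by (auto simp: sa_def sb_def sc_def c_def)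
    define D where "D = ca / sa - real n * real n * cb / sb + real d * real d * cc / sc"
    have "DERIV L x :> (cos x / sin x + real n * (- real n * cos (p - real n * x) / sin (p - real n * x))
             - real d * (- real d * cos (p - real d * x) / sin (p - real d * x)))"
      unfolding L_def using good[OF x]
      by (auto intro!: derivative_eq_intros simp: field_simps)
    also have "(cos x / sin x + real n * (- real n * cos (p - real n * x) / sin (p - real n * x))
             - real d * (- real d * cos (p - real d * x) / sin (p - real d * x))) = D"
      unfolding D_def bx by (simp add: sa_def ca_def sb_def cb_def sc_def cc_def c_def field_simps)
    finally have dd: "DERIV L x :> D" .
    have E: "D * (sa * sb * sc) = (ca * sc + (real n + 1) * cc * sa)\<^sup>2 + (real n)\<^sup>2 * sa\<^sup>2 * sc\<^sup>2"
    proof -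
      have "D * (sa * sb * sc) = ca * sb * sc - (real n)\<^sup>2 * cb * sa * sc + (real n + 1)\<^sup>2 * cc * sa * sb"
        unfolding D_def using g by (simp add: field_simps power2_eq_square n)
      also have "\<dots> = ca * (sa * cc + ca * sc) * sc - (real n)\<^sup>2 * (ca * cc - sa * sc) * sa * sc
          + (real n + 1)\<^sup>2 * cc * sa * (sa * cc + ca * sc)"
        by (simp add: sb_def cb_def sin_add cos_add sa_def ca_def sc_def cc_def)
      also have "\<dots> = (ca * sc + (real n + 1) * cc * sa)\<^sup>2 + (real n)\<^sup>2 * sa\<^sup>2 * sc\<^sup>2"
        by (rule Mf_ident)
      finally show ?thesis .
    qed
    have "(real n)\<^sup>2 * sa\<^sup>2 * sc\<^sup>2 > 0" using g n by simp
    moreover have "(ca * sc + (real n + 1) * cc * sa)\<^sup>2 \<ge> 0" by simp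
    ultimately have "D * (sa * sb * sc) > 0" using E by linarith
    moreover have "sa * sb * sc > 0" using g by simp
    ultimately have "D > 0" by (simp add: zero_less_mult_iff)
    then show ?thesis using dd by blast
  qed
  have "L a1 < L a2" by (rule DERIV_pos_imp_increasing[OF a(2) der])
  moreover have "real d * a1 < real d * a2" using a d by (intro mult_strict_left_mono) auto
  then have "real d * a1 < p" using a by linarith
  ultimately show ?thesis using Mexp[of a1] Mexp[of a2] a by simp
qed

lemma sin_c_pos:
  assumes "2 \<le> d" "0 < a" "real d * a < p" "p \<le> pi"
  shows "sin (p - real d * a) > 0"
proof -
  have "real d * a > 0" using assms by simp
  then show ?thesis using assms(3,4) by (intro sin_gt_zero) linarith+
qed


lemma Mf_surj:
  assumes d: "2 \<le> d" and p: "0 < p" "p < pi" and r: "0 < \<rho>"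
  shows "\<exists>a. 0 < a \<and> real d * a < p \<and> Mf d p a = \<rho>"
proof -
  obtain n where n: "d = Suc n" "1 \<le> n" using d by (cases d) auto
  define q where "q = p / real d"
  have q: "0 < q" "real d * q = p" using p d by (auto simp: q_def)
  have sp: "sin p \<noteq> 0" using p sin_gt_zero by fastforce
  have c0: "isCont (Mf d p) 0" unfolding Mf_def using sp by (intro continuous_intros) auto
  have M0: "Mf d p 0 = 0" by (simp add: Mf_def)
  obtain s where s: "s > 0" "\<And>x. x \<noteq> 0 \<Longrightarrow> norm (x - 0) < s \<Longrightarrow> norm (Mf d p x - 0) < \<rho>"
    using LIM_D[OF c0[unfolded isCont_def M0] r] by blast
  define G where "G a = sin (p - real d * a) ^ d / (sin a * sin (p - real n * a) ^ n)" for a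
  have "1 * q \<le> real d * q" using q d by (intro mult_right_mono) auto
  then have qpi: "q < pi" using q p by linarith
  have sq: "sin q > 0" using q qpi by (intro sin_gt_zero) auto
  have bq: "p - real n * q = q" using q by (simp add: n algebra_simps)
  have c1: "isCont G q" unfolding G_def using sq bq by (intro continuous_intros) auto
  have G0: "G q = 0" unfolding G_def using q n by simp
  have r': "0 < 1 / \<rho>" using r by simp
  obtain s2 where s2: "s2 > 0" "\<And>x. x \<noteq> q \<Longrightarrow> norm (x - q) < s2 \<Longrightarrow> norm (G x - 0) < 1 / \<rho>"
    using LIM_D[OF c1[unfolded isCont_def G0] r'] by blast
  define a1 where "a1 = min s q / 2"
  define a2 where "a2 = q - min s2 q / 2"
  have a1: "0 < a1" "a1 \<le> q / 2" "a1 < s" using s q by (auto simp: a1_def)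
  have a2: "q / 2 \<le> a2" "a2 < q" "q - a2 < s2" using s2 q by (auto simp: a2_def)
  have inI: "0 < x \<and> real d * x < p" if "a1 \<le> x" "x \<le> a2" for x
  proof -
    have "x < q" using that a2 by simp
    then have "real d * x < real d * q" using d by simp
    then show ?thesis using q that a1 by simp
  qed
  have Ma1: "Mf d p a1 < \<rho>" using s(2)[of a1] a1 by simp
  have Ma2: "Mf d p a2 > \<rho>"
  proof -
    have "norm (G a2) < 1 / \<rho>" using s2(2)[of a2] a2 by simp
    moreover have "G a2 = 1 / Mf d p a2" unfolding G_def Mf_def n by simp
    moreover have "Mf d p a2 > 0" using Wf_props[OF d _ _ p(2)[THEN less_imp_le]] inI[of a2] a1 a2 by simp
    ultimately show ?thesis using r by (simp add: field_simps)
  qed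
  have cont: "continuous_on {a1..a2} (Mf d p)"
  proof -
    have "\<forall>x\<in>{a1..a2}. sin (p - real d * x) ^ d \<noteq> 0"
    proof
      fix x assume "x \<in> {a1..a2}"
      then have x: "0 < x" "real d * x < p" using inI by auto
      show "sin (p - real d * x) ^ d \<noteq> 0" using sin_c_pos[OF d x(1) x(2)] p by simp
    qed
    then show ?thesis unfolding Mf_def by (intro continuous_intros) auto
  qed
  obtain a where "a1 \<le> a" "a \<le> a2" "Mf d p a = \<rho>"
    using IVT'[of "Mf d p" a1 \<rho> a2] Ma1 Ma2 a1 a2 cont by force
  then show ?thesis using inI by blast
qed

definition DD :: "nat \<Rightarrow> complex set" where
  "DD d = {w. 0 < Im w \<and> phi d w < pi}"

lemma DD_repr:
  assumes d: "2 \<le> d" and w: "w \<in> DD d"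
  shows "0 < Arg (w + 1) \<and> real d * Arg (w + 1) < phi d w \<and> 0 < phi d w \<and> phi d w < pi \<and>
         w = Wf d (Arg (w + 1)) (phi d w)"
proof -
  have wi: "0 < Im w" "phi d w < pi" using w by (auto simp: DD_def)
  note L = law_of_sines[OF wi(1)]
  define a where "a = Arg (w + 1)"
  define b where "b = Arg w"
  have ph: "phi d w = b + real (d - 1) * a" by (simp add: phi_def a_def b_def)
  have e1: "phi d w - real (d - 1) * a = b" using ph by simp
  have e2: "phi d w - real d * a = b - a" using ph d by (simp add: of_nat_diff algebra_simps)
  have "real (d - 1) * a \<ge> 0" using L by (simp add: a_def)
  moreover have "0 < b" using L by (simp add: a_def b_def)
  ultimately have "0 < phi d w" using ph by linarith
  moreover have "real d * a < phi d w" using e2 L by (simp add: a_def b_def)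
  moreover have "w = Wf d a (phi d w)" unfolding Wf_def e1 e2 using L by (simp add: a_def b_def)
  ultimately show ?thesis using L wi by (simp add: a_def)
qed

lemma Arg_cis_real: "0 < r \<Longrightarrow> -pi < p \<Longrightarrow> p \<le> pi \<Longrightarrow> Arg (cis p * complex_of_real r) = p"
  by (rule Arg_pos_of_real)

lemma DD_bij:
  assumes d: "2 \<le> d"
  shows "bij_betw (sf_map d) (DD d) {z. 0 < Im z}"
proof -
  have val: "sf_map d w = cis (phi d w) * complex_of_real (Mf d (phi d w) (Arg (w + 1))) \<and>
             0 < Mf d (phi d w) (Arg (w + 1))" if "w \<in> DD d" for w
  proof -
    note R = DD_repr[OF d that]
    have "sf_map d w = sf_map d (Wf d (Arg (w + 1)) (phi d w))" using R by metis
    also have "\<dots> = cis (phi d w) * complex_of_real (Mf d (phi d w) (Arg (w + 1)))"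
      using sin_c_pos[OF d, of "Arg (w+1)" "phi d w"] R d
      by (intro sf_map_Wf) auto
    finally show ?thesis using Wf_props[OF d, of "Arg (w+1)" "phi d w"] R by auto
  qed
  have into: "0 < Im (sf_map d w)" if "w \<in> DD d" for w
    using val[OF that] DD_repr[OF d that] by (simp add: sin_gt_zero)
  have inj: "inj_on (sf_map d) (DD d)"
  proof
    fix w1 w2 assume w1: "w1 \<in> DD d" and w2: "w2 \<in> DD d" and eq: "sf_map d w1 = sf_map d w2"
    note R1 = DD_repr[OF d w1] and R2 = DD_repr[OF d w2]
    note V1 = val[OF w1] and V2 = val[OF w2]
    have "Arg (sf_map d w1) = phi d w1" using V1 R1 pi_gt_zero by (simp add: Arg_cis)
    moreover have "Arg (sf_map d w2) = phi d w2" using V2 R2 pi_gt_zero by (simp add: Arg_cis)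
    ultimately have pe: "phi d w1 = phi d w2" using eq by simp
    have "norm (sf_map d w1) = Mf d (phi d w1) (Arg (w1 + 1))" using V1 by (simp add: norm_mult)
    moreover have "norm (sf_map d w2) = Mf d (phi d w2) (Arg (w2 + 1))" using V2 by (simp add: norm_mult)
    ultimately have me: "Mf d (phi d w1) (Arg (w1 + 1)) = Mf d (phi d w1) (Arg (w2 + 1))" using eq pe by simp
    have "Arg (w1 + 1) = Arg (w2 + 1)"
    proof (rule ccontr)
      assume ne: "Arg (w1 + 1) \<noteq> Arg (w2 + 1)"
      show False
      proof (cases "Arg (w1 + 1) < Arg (w2 + 1)")
        case True
        then show False using Mf_strict_mono[OF d, of "phi d w1" "Arg (w1 + 1)" "Arg (w2 + 1)"] R1 R2 pe me by auto
      next
        case False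
        then have "Arg (w2 + 1) < Arg (w1 + 1)" using ne by simp
        then show False using Mf_strict_mono[OF d, of "phi d w1" "Arg (w2 + 1)" "Arg (w1 + 1)"] R1 R2 pe me by auto
      qed
    qed
    then show "w1 = w2" using R1 R2 pe by metis
  qed
  have onto: "z \<in> sf_map d ` DD d" if "0 < Im z" for z
  proof -
    define p where "p = Arg z"
    have p: "0 < p" "p < pi" using Arg_lt_pi that by (auto simp: p_def)
    have r: "0 < cmod z" using that by auto
    obtain a where a: "0 < a" "real d * a < p" "Mf d p a = cmod z" using Mf_surj[OF d p r] by blast
    note W = Wf_props[OF d a(1) a(2) less_imp_le[OF p(2)]]
    have "Wf d a p \<in> DD d" using W p by (simp add: DD_def)
    moreover have "sf_map d (Wf d a p) = z"
    proof -
      have "sin (p - real d * a) \<noteq> 0"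
        using sin_c_pos[OF d a(1) a(2)] p by simp
      then have "sf_map d (Wf d a p) = cis p * complex_of_real (cmod z)"
        using sf_map_Wf[of d p a] d a by simp
      also have "\<dots> = z" using rcis_cmod_Arg[of z] by (simp add: rcis_def p_def mult.commute)
      finally show ?thesis .
    qed
    ultimately show ?thesis by (metis image_eqI)
  qed
  show ?thesis unfolding bij_betw_def using inj into onto by auto
qed

lemma r_sf_pow:
  assumes d: "2 \<le> d"
  shows "r_sf d ^ d = 1 / real d * (1 - 1 / real d) ^ (d - 1)" and "0 < r_sf d"
proof -
  have d0: "real d > 0" "1 - 1 / real d > 0" using d by auto
  have "(real d powr (- 1 / real d)) ^ d = real d powr (real d * (- 1 / real d))"
    using d0 by (simp add: powr_power)
  also have "\<dots> = 1 / real d" using d0 by (simp add: powr_minus_divide)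
  finally have A: "(real d powr (- 1 / real d)) ^ d = 1 / real d" .
  have "((1 - 1 / real d) powr (1 - 1 / real d)) ^ d = (1 - 1 / real d) powr (real d * (1 - 1 / real d))"
    using d0 by (simp add: powr_power)
  also have "real d * (1 - 1 / real d) = real (d - 1)" using d0 d by (simp add: of_nat_diff field_simps)
  also have "(1 - 1 / real d) powr real (d - 1) = (1 - 1 / real d) ^ (d - 1)" by (metis powr_realpow d0(2))
  finally have B: "((1 - 1 / real d) powr (1 - 1 / real d)) ^ d = (1 - 1 / real d) ^ (d - 1)" .
  show "r_sf d ^ d = 1 / real d * (1 - 1 / real d) ^ (d - 1)"
    unfolding r_sf_def power_mult_distrib A B ..
  show "0 < r_sf d" unfolding r_sf_def using d0 by simp
qed

definition Pf :: "nat \<Rightarrow> real \<Rightarrow> real" where "Pf d x = x * (x + 1) ^ (d - 1)"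

lemma Pf_start: "2 \<le> d \<Longrightarrow> Pf d (- 1 / real d) = - (r_sf d ^ d)"
  using r_sf_pow[of d] by (simp add: Pf_def)

lemma Pf_strict:
  assumes d: "2 \<le> d" and xy: "- 1 / real d \<le> x" "x < y"
  shows "Pf d x < Pf d y"
proof -
  obtain n where n: "d = Suc n" "1 \<le> n" using d by (cases d) auto
  have der: "\<exists>D. DERIV (Pf d) t :> D \<and> 0 < D" if "x < t" "t < y" for t
  proof -
    have t: "- 1 / real d < t" using that xy by simp
    have t1: "t + 1 > 0"
    proof -
      have "- 1 / real d \<ge> - 1 / 2" using d by (simp add: field_simps)
      then show ?thesis using t by linarith
    qed
    have dt: "real d * t + 1 > 0" using t d by (simp add: field_simps)
    have "DERIV (Pf d) t :> ((t + 1) ^ n + t * (real n * (t + 1) ^ (n - 1)))"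
      unfolding Pf_def n by (auto intro!: derivative_eq_intros)
    moreover have "(t + 1) ^ n + t * (real n * (t + 1) ^ (n - 1)) = (t + 1) ^ (n - 1) * (real d * t + 1)"
    proof -
      have "(t + 1) ^ n = (t + 1) ^ (n - 1) * (t + 1)" using n by (metis Suc_diff_le diff_Suc_1 power_Suc2)
      then show ?thesis by (simp add: n algebra_simps)
    qed
    moreover have "(t + 1) ^ (n - 1) * (real d * t + 1) > 0" using t1 dt by simp
    ultimately show ?thesis by metis
  qed
  have "continuous_on {x..y} (Pf d)" unfolding Pf_def by (intro continuous_intros)
  then show ?thesis using DERIV_pos_imp_increasing_open[OF xy(2) der] by blast
qed

lemma Pf_bij:
  assumes d: "2 \<le> d"
  shows "bij_betw (Pf d) {x. - 1 / real d < x} {y. - (r_sf d ^ d) < y}"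
proof -
  have inj: "inj_on (Pf d) {x. - 1 / real d < x}"
  proof
    fix x y assume x: "x \<in> {x. - 1 / real d < x}" and y: "y \<in> {x. - 1 / real d < x}" and e: "Pf d x = Pf d y"
    show "x = y"
    proof (rule ccontr)
      assume "x \<noteq> y"
      then consider "x < y" | "y < x" by linarith
      then show False using Pf_strict[OF d, of x y] Pf_strict[OF d, of y x] x y e by (cases; auto)
    qed
  qed
  have into: "Pf d x > - (r_sf d ^ d)" if "- 1 / real d < x" for x
    using Pf_strict[OF d, of "- 1 / real d" x] that Pf_start[OF d] by simp
  have onto: "y \<in> Pf d ` {x. - 1 / real d < x}" if y: "- (r_sf d ^ d) < y" for y
  proof -
    define b where "b = \<bar>y\<bar> + 1"
    have "- 1 / real d \<le> 0" by simp
    moreover have "0 < b" by (simp add: b_def add_nonneg_pos)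
    ultimately have b: "- 1 / real d \<le> b" by linarith
    have "y \<le> b" by (simp add: b_def)
    also have "b \<le> Pf d b"
    proof -
      have "1 \<le> (b + 1) ^ (d - 1)" by (simp add: b_def)
      then have "b * 1 \<le> b * (b + 1) ^ (d - 1)" by (intro mult_left_mono) (auto simp: b_def)
      then show ?thesis by (simp add: Pf_def)
    qed
    finally have yb: "y \<le> Pf d b" .
    have "continuous_on {- 1 / real d..b} (Pf d)" unfolding Pf_def by (intro continuous_intros)
    then obtain x where x: "- 1 / real d \<le> x" "x \<le> b" "Pf d x = y"
      using IVT'[of "Pf d" "- 1 / real d" y b] b yb y Pf_start[OF d] by auto
    have "x \<noteq> - 1 / real d" using x y Pf_start[OF d] by auto
    then show ?thesis using x by force
  qed
  show ?thesis unfolding bij_betw_def using inj into onto by auto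
qed

lemma arctan_add_le:
  assumes "0 \<le> a" "0 \<le> b"
  shows "arctan (a + b) \<le> arctan a + arctan b"
proof -
  define h where "h t = arctan a + arctan t - arctan (a + t)" for t
  have "h 0 \<le> h b"
  proof (rule DERIV_nonneg_imp_nondecreasing[OF assms(2)])
    fix t assume t: "0 \<le> t" "t \<le> b"
    have "DERIV h t :> inverse (1 + t\<^sup>2) - inverse (1 + (a + t)\<^sup>2)"
      unfolding h_def by (auto intro!: derivative_eq_intros)
    moreover have "inverse (1 + (a + t)\<^sup>2) \<le> inverse (1 + t\<^sup>2)"
    proof -
      have "t\<^sup>2 \<le> (a + t)\<^sup>2" using t assms by (intro power_mono) auto
      then show ?thesis by (intro le_imp_inverse_le) (auto intro: add_pos_nonneg)
    qed
    ultimately show "\<exists>y. DERIV h t :> y \<and> 0 \<le> y" by force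
  qed
  then show ?thesis by (simp add: h_def)
qed

lemma arctan_mult_le:
  assumes "0 \<le> u"
  shows "arctan (real n * u) \<le> real n * arctan u"
proof (induction n)
  case 0 then show ?case by simp
next
  case (Suc n)
  have "arctan (real (Suc n) * u) = arctan (real n * u + u)" by (simp add: algebra_simps)
  also have "\<dots> \<le> arctan (real n * u) + arctan u" using assms by (intro arctan_add_le) auto
  also have "\<dots> \<le> real n * arctan u + arctan u" using Suc by simp
  finally show ?case by (simp add: algebra_simps)
qed

lemma aux_field: "(q::real) \<noteq> 0 \<Longrightarrow> inverse q - (1 * q - t * (2 * t)) / q\<^sup>2 = 2 * t\<^sup>2 / q\<^sup>2"
  by (simp add: field_simps power2_eq_square)

lemma arctan_lower:
  assumes "0 \<le> v"
  shows "v / (1 + v\<^sup>2) \<le> arctan v"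
proof -
  define h where "h t = arctan t - t / (1 + t\<^sup>2)" for t
  have "h 0 \<le> h v"
  proof (rule DERIV_nonneg_imp_nondecreasing[OF assms])
    fix t assume t: "0 \<le> t" "t \<le> v"
    have p: "1 + t\<^sup>2 > 0" by (simp add: add_pos_nonneg)
    have "DERIV h t :> inverse (1 + t\<^sup>2) - (1 * (1 + t\<^sup>2) - t * (2 * t)) / (1 + t\<^sup>2)\<^sup>2"
      unfolding h_def using p by (auto intro!: derivative_eq_intros simp: power2_eq_square)
    moreover have "inverse (1 + t\<^sup>2) - (1 * (1 + t\<^sup>2) - t * (2 * t)) / (1 + t\<^sup>2)\<^sup>2 = 2 * t\<^sup>2 / (1 + t\<^sup>2)\<^sup>2"
      using aux_field[of "1 + t\<^sup>2" t] p by simp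
    ultimately show "\<exists>y. DERIV h t :> y \<and> 0 \<le> y" by force
  qed
  then show ?thesis by (simp add: h_def)
qed

lemma phi_shift:
  assumes "0 < Im z" "0 < c"
  shows "phi d (z + complex_of_real c) < phi d z"
proof -
  have "Arg (z + 1 + complex_of_real c) < Arg (z + 1)" using Arg_shift[of "z+1" c] assms by simp
  then have "real (d - 1) * Arg (z + complex_of_real c + 1) \<le> real (d - 1) * Arg (z + 1)"
    by (intro mult_left_mono) (auto simp: algebra_simps)
  then show ?thesis using Arg_shift[OF assms] by (simp add: phi_def)
qed

lemma phi_left_edge:
  assumes d: "2 \<le> d" and y: "0 < y"
  shows "pi \<le> phi d (Complex (- 1 / real d) y)"
proof -
  have d0: "real d > 0" "1 - 1 / real d > 0" using d by auto
  have A1: "Arg (Complex (- 1 / real d) y) = pi - arctan (real d * y)"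
    using Arg_upper_neg[of "Complex (- 1 / real d) y"] y d0 by (simp add: mult.commute)
  have e: "Complex (- 1 / real d) y + 1 = Complex (1 - 1 / real d) y" by (simp add: complex_eq_iff)
  have A2: "Arg (Complex (- 1 / real d) y + 1) = arctan (y / (1 - 1 / real d))"
    unfolding e using Arg_upper_pos[of "Complex (1 - 1 / real d) y"] y d0 by simp
  have "real (d - 1) * (y / (1 - 1 / real d)) = real d * y"
    using d0 d by (simp add: of_nat_diff field_simps)
  then have "arctan (real d * y) \<le> real (d - 1) * arctan (y / (1 - 1 / real d))"
    using arctan_mult_le[of "y / (1 - 1 / real d)" "d - 1"] y d0 by simp
  then show ?thesis unfolding phi_def A1 A2 by simp
qed

lemma DD_Re:
  assumes d: "2 \<le> d" and w: "w \<in> DD d"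
  shows "- 1 / real d < Re w"
proof (rule ccontr)
  assume "\<not> - 1 / real d < Re w"
  then have le: "Re w \<le> - 1 / real d" by simp
  have wi: "0 < Im w" "phi d w < pi" using w by (auto simp: DD_def)
  define w0 where "w0 = Complex (- 1 / real d) (Im w)"
  have p0: "pi \<le> phi d w0" unfolding w0_def using phi_left_edge[OF d wi(1)] .
  have "phi d w0 \<le> phi d w"
  proof (cases "Re w = - 1 / real d")
    case True
    then have "w0 = w" by (simp add: w0_def complex_eq_iff)
    then show ?thesis by simp
  next
    case False
    then have c: "0 < - 1 / real d - Re w" using le by simp
    have "w0 = w + complex_of_real (- 1 / real d - Re w)" by (simp add: w0_def complex_eq_iff)
    then show ?thesis using phi_shift[OF wi(1) c, of d] by simp
  qed
  then show False using p0 wi by simp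
qed

lemma frac_aux:
  fixes n y t Q a :: real
  assumes "0 < t" "0 < Q" "0 < y" "n * Q < a * t"
  shows "n * (y / t) < y * a / Q"
proof -
  have k2: "y * (n * Q) < y * (a * t)" using assms by (intro mult_strict_left_mono) auto
  have "n * (y / t) = (y * (n * Q)) / (t * Q)" using assms by (simp add: field_simps)
  also have "\<dots> < (y * (a * t)) / (t * Q)" using k2 assms by (intro divide_strict_right_mono) auto
  also have "\<dots> = y * a / Q" using assms by (simp add: field_simps)
  finally show ?thesis .
qed

lemma phi_vertical:
  assumes d: "2 \<le> d" and x1: "- 1 / real d < x1" "x1 < 0"
  shows "\<exists>e>0. \<forall>y. 0 < y \<and> y < e \<longrightarrow> phi d (Complex x1 y) < pi"
proof -
  define s where "s = - x1"
  define n where "n = real (d - 1)"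
  have n: "n \<ge> 1" "real d = n + 1" using d by (auto simp: n_def of_nat_diff)
  have s: "0 < s" "real d * s < 1" using x1 d by (auto simp: s_def field_simps)
  define K where "K = s * (1 - real d * s)"
  have K: "K > 0" using s by (simp add: K_def)
  have s1: "s < 1" using s n by (smt (verit) mult_le_cancel_right1)
  define e where "e = min 1 (K / n)"
  have e: "e > 0" using K n by (simp add: e_def)
  have "phi d (Complex x1 y) < pi" if y: "0 < y" "y < e" for y
  proof -
    have A1: "Arg (Complex x1 y) = pi - arctan (y / s)"
      using Arg_upper_neg[of "Complex x1 y"] y x1 by (simp add: s_def)
    have eq: "Complex x1 y + 1 = Complex (1 - s) y" by (simp add: complex_eq_iff s_def)
    have A2: "Arg (Complex x1 y + 1) = arctan (y / (1 - s))"
      unfolding eq using Arg_upper_pos[of "Complex (1 - s) y"] y s1 by simp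
    have yy: "n * y\<^sup>2 < K"
    proof -
      have "y\<^sup>2 \<le> y" using y e_def by (simp add: power2_eq_square mult_le_cancel_right1 e_def)
      then have "n * y\<^sup>2 \<le> n * y" using n by (intro mult_left_mono) auto
      also have "n * y < n * (K / n)" using y n by (intro mult_strict_left_mono) (auto simp: e_def)
      also have "\<dots> = K" using n by simp
      finally show ?thesis .
    qed
    have key: "n * (s\<^sup>2 + y\<^sup>2) < s * (1 - s)"
      using yy n by (simp add: K_def algebra_simps power2_eq_square)
    have "n * arctan (y / (1 - s)) \<le> n * (y / (1 - s))"
      using y s1 n by (intro mult_left_mono arctan_le_self) auto
    also have "n * (y / (1 - s)) < y * s / (s\<^sup>2 + y\<^sup>2)"
    proof -
      have pos: "s\<^sup>2 + y\<^sup>2 > 0" "1 - s > 0" using s s1 by (auto simp: add_pos_nonneg)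
      show ?thesis using frac_aux[OF pos(2) pos(1) y(1) key] .
    qed
    also have "y * s / (s\<^sup>2 + y\<^sup>2) = (y / s) / (1 + (y / s)\<^sup>2)"
      using s by (simp add: field_simps power2_eq_square)
    also have "\<dots> \<le> arctan (y / s)" using y s by (intro arctan_lower) auto
    finally have "n * arctan (y / (1 - s)) < arctan (y / s)" .
    then show ?thesis unfolding phi_def A1 A2 n_def by simp
  qed
  then show ?thesis using e by blast
qed

definition Om :: "nat \<Rightarrow> complex set" where
  "Om d = DD d \<union> cnj ` DD d \<union> complex_of_real ` {x. - 1 / real d < x}"

lemma of_real_image_iff: "z \<in> complex_of_real ` A \<longleftrightarrow> Im z = 0 \<and> Re z \<in> A"
proof
  assume "Im z = 0 \<and> Re z \<in> A"
  then have "z = complex_of_real (Re z)" "Re z \<in> A" by (auto simp: complex_eq_iff)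
  then show "z \<in> complex_of_real ` A" by blast
qed auto

lemma cnj_image_iff: "z \<in> cnj ` A \<longleftrightarrow> cnj z \<in> A"
  by (metis complex_cnj_cnj image_iff)

lemma Om_iff:
  "w \<in> Om d \<longleftrightarrow> (0 < Im w \<and> phi d w < pi) \<or> (Im w < 0 \<and> phi d (cnj w) < pi) \<or> (Im w = 0 \<and> - 1 / real d < Re w)"
  by (auto simp: Om_def DD_def cnj_image_iff of_real_image_iff)

lemma Om_cnj: "cnj w \<in> Om d \<longleftrightarrow> w \<in> Om d"
  unfolding Om_iff by auto

lemma Om_Re: "2 \<le> d \<Longrightarrow> w \<in> Om d \<Longrightarrow> - 1 / real d < Re w"
  using DD_Re[of d w] DD_Re[of d "cnj w"] unfolding Om_iff DD_def by auto

lemma DD_near: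
  assumes d: "2 \<le> d" and x1: "- 1 / real d < x1" "x1 < 0"
  and e: "\<forall>y. 0 < y \<and> y < e \<longrightarrow> phi d (Complex x1 y) < pi"
  and v: "0 < Im v" "Im v < e" "x1 \<le> Re v"
  shows "v \<in> DD d"
proof -
  have p: "phi d (Complex x1 (Im v)) < pi" using e v by auto
  have "phi d v \<le> phi d (Complex x1 (Im v))"
  proof (cases "Re v = x1")
    case True
    then have "Complex x1 (Im v) = v" by (simp add: complex_eq_iff)
    then show ?thesis by simp
  next
    case False
    then have c: "0 < Re v - x1" using v by simp
    have "v = Complex x1 (Im v) + complex_of_real (Re v - x1)" by (simp add: complex_eq_iff)
    then show ?thesis using phi_shift[of "Complex x1 (Im v)" "Re v - x1" d] c v by (metis less_imp_le complex.sel(2))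
  qed
  then show ?thesis using p v by (simp add: DD_def)
qed

lemma phi_cont: "0 < Im w \<Longrightarrow> isCont (phi d) w"
proof -
  assume w: "0 < Im w"
  have c1: "isCont Arg w" using w by (intro continuous_at_Arg) (simp add: complex_nonpos_Reals_iff)
  have c2: "isCont Arg (w + 1)" using w by (intro continuous_at_Arg) (simp add: complex_nonpos_Reals_iff)
  have c3: "isCont (\<lambda>z. Arg (z + 1)) w" using isCont_o2[where f="\<lambda>z. z + 1" and a=w and g=Arg] c2 by (simp add: continuous_intros)
  show ?thesis unfolding phi_def[abs_def] using c1 c3 by (intro continuous_intros)
qed

lemma open_DD: "open (DD d)"
proof -
  have "continuous_on {w. 0 < Im w} (phi d)"
    by (intro continuous_at_imp_continuous_on) (auto intro: phi_cont)
  then have "open ({w. 0 < Im w} \<inter> phi d -` {..<pi})"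
    by (intro continuous_open_preimage open_halfspace_Im_gt open_lessThan)
  moreover have "{w. 0 < Im w} \<inter> phi d -` {..<pi} = DD d" by (auto simp: DD_def)
  ultimately show ?thesis by simp
qed

lemma open_cnj_DD: "open (cnj ` DD d)"
proof -
  have "cnj ` DD d = cnj -` DD d" using cnj_image_iff by blast
  moreover have "open (cnj -` DD d)"
    by (intro continuous_open_vimage open_DD) (intro continuous_intros)
  ultimately show ?thesis by simp
qed

lemma open_Om:
  assumes d: "2 \<le> d"
  shows "open (Om d)"
  unfolding open_contains_ball
proof
  fix w assume w: "w \<in> Om d"
  show "\<exists>e>0. ball w e \<subseteq> Om d"
  proof (cases "w \<in> DD d \<union> cnj ` DD d")
    case True
    have "open (DD d \<union> cnj ` DD d)" using open_DD open_cnj_DD by auto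
    then obtain e where "e > 0" "ball w e \<subseteq> DD d \<union> cnj ` DD d" using True open_contains_ball by blast
    then show ?thesis unfolding Om_def by blast
  next
    case False
    then have wr: "Im w = 0" "- 1 / real d < Re w" using w unfolding Om_def of_real_image_iff by auto
    define x where "x = Re w"
    define x1 where "x1 = (- 1 / real d + min x 0) / 2"
    have dpos: "0 < real d" using d by simp
    have m: "- 1 / real d < min x 0" "min x 0 \<le> 0" "min x 0 \<le> x" using wr dpos by (auto simp: x_def)
    have avg: "\<And>a b::real. a < b \<Longrightarrow> a < (a + b) / 2 \<and> (a + b) / 2 < b" by (auto simp: field_simps)
    have x1a: "- 1 / real d < x1" unfolding x1_def using avg[OF m(1)] by blast
    have x1m: "x1 < min x 0" unfolding x1_def using avg[OF m(1)] by blast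
    have x1b: "x1 < 0" using x1m m by linarith
    have x1c: "x1 < x" using x1m m by linarith
    note x1 = x1a x1b x1c
    obtain e where e: "e > 0" "\<forall>y. 0 < y \<and> y < e \<longrightarrow> phi d (Complex x1 y) < pi"
      using phi_vertical[OF d x1(1) x1(2)] by blast
    define r where "r = min e (x - x1)"
    have r: "r > 0" using e x1 by (simp add: r_def)
    have "ball w r \<subseteq> Om d"
    proof
      fix v assume "v \<in> ball w r"
      then have dv: "cmod (w - v) < r" by (simp add: dist_norm)
      have re: "\<bar>Re (w - v)\<bar> < r" and im: "\<bar>Im (w - v)\<bar> < r"
        using dv abs_Re_le_cmod[of "w - v"] abs_Im_le_cmod[of "w - v"] by linarith+
      have "\<bar>Re w - Re v\<bar> < x - x1" using re by (simp add: r_def x_def)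
      then have vr: "x1 \<le> Re v" by (simp add: x_def abs_less_iff)
      have vi: "\<bar>Im v\<bar> < e" using im wr by (simp add: r_def)
      consider "0 < Im v" | "Im v < 0" | "Im v = 0" by linarith
      then show "v \<in> Om d"
      proof cases
        case 1
        then have "v \<in> DD d" using DD_near[OF d x1(1) x1(2) e(2)] vr vi by simp
        then show ?thesis by (simp add: Om_def)
      next
        case 2
        then have "cnj v \<in> DD d" using DD_near[OF d x1(1) x1(2) e(2), of "cnj v"] vr vi by simp
        then show ?thesis by (simp add: Om_def cnj_image_iff)
      next
        case 3
        have "- 1 / real d < Re v" using vr x1 by simp
        then show ?thesis using 3 by (simp add: Om_def of_real_image_iff)
      qed
    qed
    then show ?thesis using r by blast
  qed
qed

lemma sf_cnj: "sf_map d (cnj w) = cnj (sf_map d w)"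
  by (simp add: sf_map_def)

lemma sf_real: "sf_map d (complex_of_real x) = complex_of_real (Pf d x)"
  by (simp add: sf_map_def Pf_def)

lemma Om_bij:
  assumes d: "2 \<le> d"
  shows "bij_betw (sf_map d) (Om d) (UNIV - complex_of_real ` {.. - (r_sf d ^ d)})"
proof -
  note B = DD_bij[OF d] and P = Pf_bij[OF d]
  have i1: "0 < Im (sf_map d w)" if "w \<in> DD d" for w using B that by (auto simp: bij_betw_def)
  have i2: "Im (sf_map d w) < 0" if "w \<in> cnj ` DD d" for w
    using i1[of "cnj w"] that by (simp add: cnj_image_iff sf_cnj[of d "cnj w", simplified])
  have i3: "Im (sf_map d w) = 0" if "w \<in> complex_of_real ` {x. - 1 / real d < x}" for w
    using that by (auto simp: sf_real)
  have injD: "inj_on (sf_map d) (DD d)" using B by (simp add: bij_betw_def)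
  have injP: "inj_on (Pf d) {x. - 1 / real d < x}" using P by (simp add: bij_betw_def)
  have inj: "inj_on (sf_map d) (Om d)"
  proof
    fix w1 w2 assume w1: "w1 \<in> Om d" and w2: "w2 \<in> Om d" and eq: "sf_map d w1 = sf_map d w2"
    consider "w1 \<in> DD d" | "w1 \<in> cnj ` DD d" | "w1 \<in> complex_of_real ` {x. - 1 / real d < x}"
      using w1 unfolding Om_def by blast
    then show "w1 = w2"
    proof cases
      case 1
      then have "w2 \<in> DD d" using w2 eq i1 i2 i3 unfolding Om_def by (metis Un_iff less_irrefl less_asym)
      then show ?thesis using 1 eq injD by (auto dest: inj_onD)
    next
      case 2
      then have "w2 \<in> cnj ` DD d" using w2 eq i1 i2 i3 unfolding Om_def by (metis Un_iff less_irrefl less_asym)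
      have e2: "sf_map d (cnj w1) = sf_map d (cnj w2)" using eq by (simp add: sf_cnj)
      have c1: "cnj w1 \<in> DD d" using 2 by (simp add: cnj_image_iff)
      have c2: "cnj w2 \<in> DD d" using \<open>w2 \<in> cnj ` DD d\<close> by (simp add: cnj_image_iff)
      have "cnj w1 = cnj w2" by (rule inj_onD[OF injD e2 c1 c2])
      then show ?thesis by simp
    next
      case 3
      then have "w2 \<in> complex_of_real ` {x. - 1 / real d < x}" using w2 eq i1 i2 i3 unfolding Om_def by (metis Un_iff less_irrefl)
      then obtain x1 x2 where "w1 = complex_of_real x1" "w2 = complex_of_real x2"
        "x1 \<in> {x. - 1 / real d < x}" "x2 \<in> {x. - 1 / real d < x}" using 3 by blast
      then show ?thesis using eq injP by (auto simp: sf_real dest: inj_onD)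
    qed
  qed
  have img: "sf_map d ` Om d = UNIV - complex_of_real ` {.. - (r_sf d ^ d)}"
  proof
    show "sf_map d ` Om d \<subseteq> UNIV - complex_of_real ` {.. - (r_sf d ^ d)}"
    proof
      fix z assume "z \<in> sf_map d ` Om d"
      then obtain w where w: "w \<in> Om d" "z = sf_map d w" by blast
      consider "w \<in> DD d" | "w \<in> cnj ` DD d" | "w \<in> complex_of_real ` {x. - 1 / real d < x}"
        using w unfolding Om_def by blast
      then show "z \<in> UNIV - complex_of_real ` {.. - (r_sf d ^ d)}"
      proof cases
        case 3
        then obtain x where x: "- 1 / real d < x" "w = complex_of_real x" by blast
        have "- (r_sf d ^ d) < Pf d x" using P x by (auto simp: bij_betw_def)
        then show ?thesis using w x by (auto simp: sf_real of_real_image_iff)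
      next
        case 1
        then show ?thesis using i1[OF 1] w by (auto simp: of_real_image_iff)
      next
        case 2
        then show ?thesis using i2[OF 2] w by (auto simp: of_real_image_iff)
      qed
    qed
    show "UNIV - complex_of_real ` {.. - (r_sf d ^ d)} \<subseteq> sf_map d ` Om d"
    proof
      fix z assume z: "z \<in> UNIV - complex_of_real ` {.. - (r_sf d ^ d)}"
      consider "0 < Im z" | "Im z < 0" | "Im z = 0" by linarith
      then show "z \<in> sf_map d ` Om d"
      proof cases
        case 1
        then obtain w where "w \<in> DD d" "z = sf_map d w" using B by (auto simp: bij_betw_def)
        then show ?thesis by (auto simp: Om_def)
      next
        case 2
        then have "0 < Im (cnj z)" by simp
        then have "cnj z \<in> sf_map d ` DD d" using B by (simp add: bij_betw_def)
        then obtain w where w: "w \<in> DD d" "cnj z = sf_map d w" by blast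
        then have "z = sf_map d (cnj w)" by (metis complex_cnj_cnj sf_cnj)
        moreover have "cnj w \<in> Om d" using w by (simp add: Om_def cnj_image_iff)
        ultimately show ?thesis by blast
      next
        case 3
        then have "- (r_sf d ^ d) < Re z" using z by (auto simp: of_real_image_iff)
        then have "Re z \<in> Pf d ` {x. - 1 / real d < x}" using P by (simp add: bij_betw_def)
        then obtain x where x0: "x \<in> {x. - 1 / real d < x}" "Re z = Pf d x" by (rule imageE)
        then have x: "- 1 / real d < x" "Pf d x = Re z" by auto
        have "z = sf_map d (complex_of_real x)" using x 3 by (simp add: sf_real complex_eq_iff)
        moreover have "complex_of_real x \<in> Om d" using x by (simp add: Om_def)
        ultimately show ?thesis by blast
      qed
    qed
  qed
  show ?thesis unfolding bij_betw_def using inj img by blast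
qed

definition sincf :: "real \<Rightarrow> real" where "sincf x = (if x = 0 then 1 else sin x / x)"

lemma sincf_at_0: "((\<lambda>x. sin x / x::real) \<longlongrightarrow> 1) (at 0)"
  using DERIV_sin [of 0] by (auto simp add: has_field_derivative_def field_has_derivative_at)

lemma isCont_sincf: "isCont sincf x"
proof cases
  assume "x = 0" then show ?thesis
    using LIM_equal [where g = "\<lambda>x. sin x / x" and a=0 and f=sincf and l=1]
    by (auto simp: isCont_def sincf_at_0 sincf_def)
next
  assume "x \<noteq> 0" show ?thesis
    by (rule continuous_transform_within [where \<delta> = "abs x" and f = "\<lambda>x. sin x / x"])
       (auto simp add: dist_real_def \<open>x \<noteq> 0\<close> sincf_def)
qed

lemma continuous_on_sincf[continuous_intros]:
  "continuous_on S f \<Longrightarrow> continuous_on S (\<lambda>x. sincf (f x))"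
  using continuous_on_compose[of S f sincf, OF _ continuous_at_imp_continuous_on]
  by (auto simp: isCont_sincf)

lemma sincf_pos: "0 \<le> x \<Longrightarrow> x < pi \<Longrightarrow> 0 < sincf x"
  by (auto simp: sincf_def intro!: divide_pos_pos sin_gt_zero)

definition Ef :: "nat \<Rightarrow> real \<Rightarrow> complex" where
  "Ef d a = cis (pi - real (d - 1) * a) * complex_of_real (sincf a / (real d * sincf (real d * a)))"

definition al :: "nat \<Rightarrow> real \<Rightarrow> real" where "al d t = pi * t / (real d * (1 + t))"

definition gam :: "nat \<Rightarrow> real \<Rightarrow> complex" where "gam d t = Ef d (al d t)"

lemma al_alt: "real d > 0 \<Longrightarrow> real d * al d t = pi * (t / (1 + t))"
proof -
  assume d0: "real d > 0"
  have "al d t = pi / real d * (t / (1 + t))" by (simp add: al_def)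
  then show ?thesis using d0 by simp
qed

lemma al_props:
  assumes d: "2 \<le> d" and t: "0 \<le> t"
  shows "0 \<le> al d t" "real d * al d t < pi" "0 < t \<Longrightarrow> 0 < al d t"
proof -
  have d0: "real d > 0" using d by simp
  show "0 \<le> al d t" using t d0 by (simp add: al_def)
  show "0 < t \<Longrightarrow> 0 < al d t" using d0 by (simp add: al_def)
  have "real d * al d t = pi * (t / (1 + t))" using al_alt d0 by blast
  also have "\<dots> < pi * 1" using t by (intro mult_strict_left_mono) auto
  finally show "real d * al d t < pi" by simp
qed

lemma al_mono:
  assumes d: "2 \<le> d" and st: "0 \<le> s" "s < t"
  shows "al d s < al d t"
proof -
  have d0: "real d > 0" using d by simp
  have "s / (1 + s) < t / (1 + t)" using st by (simp add: field_simps)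
  then have "pi / real d * (s / (1 + s)) < pi / real d * (t / (1 + t))" using d0 by (intro mult_strict_left_mono) auto
  then show ?thesis by (simp add: al_def field_simps)
qed

lemma al_inv:
  assumes d: "2 \<le> d" and a: "0 < a" "real d * a < pi"
  shows "al d (real d * a / (pi - real d * a)) = a" "0 < real d * a / (pi - real d * a)"
proof -
  have d0: "real d > 0" using d by simp
  have q: "pi - real d * a > 0" using a by simp
  show "0 < real d * a / (pi - real d * a)" using q d0 a by simp
  show "al d (real d * a / (pi - real d * a)) = a"
    unfolding al_def using q d0 by (simp add: field_simps)
qed

lemma Ef_Wf:
  assumes d: "2 \<le> d" and a: "0 < a" "real d * a < pi"
  shows "Ef d a = Wf d a pi"
proof -
  have d0: "real d > 0" using d by simp
  have "sincf a / (real d * sincf (real d * a)) = sin a / sin (real d * a)"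
    using a d0 by (simp add: sincf_def field_simps)
  then show ?thesis by (simp add: Ef_def Wf_def)
qed

lemma gam0: "2 \<le> d \<Longrightarrow> gam d 0 = - 1 / real d"
  by (simp add: gam_def Ef_def al_def sincf_def)

lemma gam_pos:
  assumes d: "2 \<le> d" and t: "0 < t"
  shows "gam d t = Wf d (al d t) pi" "0 < Im (gam d t)" "phi d (gam d t) = pi"
    "sf_map d (gam d t) = - complex_of_real (Mf d pi (al d t))" "0 < Mf d pi (al d t)"
proof -
  note A = al_props[OF d less_imp_le[OF t]]
  have a: "0 < al d t" "real d * al d t < pi" using A t by auto
  show g: "gam d t = Wf d (al d t) pi" unfolding gam_def using Ef_Wf[OF d a] .
  note W = Wf_props[OF d a order_refl]
  show "0 < Im (gam d t)" "phi d (gam d t) = pi" "0 < Mf d pi (al d t)" using W g by auto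
  have "sin (pi - real d * al d t) \<noteq> 0" using sin_c_pos[OF d a order_refl] by simp
  then show "sf_map d (gam d t) = - complex_of_real (Mf d pi (al d t))"
    unfolding g using sf_map_Wf[of d pi "al d t"] d by simp
qed

lemma gam_cont:
  assumes d: "2 \<le> d"
  shows "continuous_on {0..} (gam d)"
proof -
  have d0: "real d > 0" using d by simp
  have c1: "continuous_on {0..} (al d)" unfolding al_def[abs_def]
    using d0 by (intro continuous_intros) (auto simp: add_pos_nonneg)
  define T where "T = {a. 0 \<le> a \<and> real d * a < pi}"
  have c2: "continuous_on T (Ef d)" unfolding Ef_def[abs_def]
  proof (intro continuous_intros)
    show "\<forall>x\<in>T. real d * sincf (real d * x) \<noteq> 0"
    proof
      fix x assume "x \<in> T"
      then have "0 \<le> real d * x" "real d * x < pi" using d0 by (auto simp: T_def)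
      then have "0 < sincf (real d * x)" by (rule sincf_pos)
      then show "real d * sincf (real d * x) \<noteq> 0" using d0 by simp
    qed
  qed
  have "al d ` {0..} \<subseteq> T" using al_props[OF d] by (auto simp: T_def)
  then show ?thesis unfolding gam_def[abs_def] using continuous_on_compose2[OF c2 c1] by blast
qed

lemma gam_norm_bound:
  assumes d: "2 \<le> d" and t: "1 \<le> t"
  shows "sin (pi / (2 * real d)) * (1 + t) / pi \<le> norm (gam d t)"
proof -
  have d0: "real d > 0" using d by simp
  have t0: "0 < t" using t by simp
  define a where "a = al d t"
  have a: "0 < a" "real d * a < pi" using al_props[OF d] t0 by (auto simp: a_def)
  have ea: "real d * a = pi * (t / (1 + t))" using al_alt d0 by (simp add: a_def)
  have "pi - pi * (t / (1 + t)) = pi / (1 + t)" using t0 by (simp add: field_simps)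
  then have pa: "pi - real d * a = pi / (1 + t)" using ea by simp
  have a2: "pi / (2 * real d) \<le> a"
  proof -
    have "1 / 2 \<le> t / (1 + t)" using t by (simp add: field_simps)
    then have "pi * (1 / 2) \<le> real d * a" unfolding ea by (intro mult_left_mono) auto
    then show ?thesis using d0 by (simp add: field_simps)
  qed
  have a3: "a \<le> pi / 2"
  proof -
    have "2 * a \<le> real d * a" using d a by (intro mult_right_mono) auto
    then show ?thesis using a(2) by linarith
  qed
  have s1: "sin (pi / (2 * real d)) \<le> sin a"
  proof (rule sin_monotone_2pi_le)
    show "- (pi / 2) \<le> pi / (2 * real d)" using d0 by (smt (verit) divide_nonneg_nonneg pi_gt_zero of_nat_0_le_iff)
  qed (use a2 a3 in auto)
  have sc: "0 < sin (pi - real d * a)" using sin_c_pos[OF d a order_refl] .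
  have s2: "sin (pi - real d * a) \<le> pi / (1 + t)" using sin_x_le_x[of "pi - real d * a"] a pa by simp
  have "norm (gam d t) = sin a / sin (pi - real d * a)"
    using gam_pos(1)[OF d t0] sc sin_gt_zero[of a] a a3 by (simp add: Wf_def a_def norm_mult norm_divide)
  moreover have "sin (pi / (2 * real d)) * (1 + t) / pi \<le> sin a / sin (pi - real d * a)"
  proof -
    have sp: "0 \<le> sin (pi / (2 * real d))" using d0 by (intro sin_ge_zero) (auto simp: field_simps)
    have "sin (pi / (2 * real d)) * (1 + t) / pi = sin (pi / (2 * real d)) / (pi / (1 + t))"
      using t0 by (simp add: field_simps)
    also have "\<dots> \<le> sin a / (pi / (1 + t))" using s1 t0 by (intro divide_right_mono) auto
    also have "\<dots> \<le> sin a / sin (pi - real d * a)"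
      using s2 sc s1 sp t0 by (intro divide_left_mono) (auto intro!: mult_pos_pos divide_pos_pos)
    finally show ?thesis .
  qed
  ultimately show ?thesis by simp
qed

lemma gam_norm_inf:
  assumes d: "2 \<le> d"
  shows "filterlim (\<lambda>t. norm (gam d t)) at_top at_top"
proof -
  define K where "K = sin (pi / (2 * real d))"
  have K: "K > 0" unfolding K_def using d
    by (intro sin_gt_zero) (auto simp: field_simps)
  show ?thesis unfolding filterlim_at_top eventually_at_top_linorder
  proof
    fix Z :: real
    show "\<exists>N. \<forall>t\<ge>N. Z \<le> norm (gam d t)"
    proof (intro exI allI impI)
      fix t assume t: "max 1 (Z * pi / K) \<le> t"
      have "Z * pi / K \<le> t" using t by simp
      then have "Z * pi \<le> t * K" using K by (simp add: field_simps)
      then have "Z \<le> K * t / pi" by (simp add: field_simps mult.commute)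
      also have "\<dots> \<le> K * (1 + t) / pi" using K by (intro divide_right_mono mult_left_mono) auto
      also have "\<dots> \<le> norm (gam d t)" using gam_norm_bound[OF d, of t] t by (simp add: K_def)
      finally show "Z \<le> norm (gam d t)" .
    qed
  qed
qed

abbreviation Gam :: "nat \<Rightarrow> complex set" where "Gam d \<equiv> gam d ` {0..}"

lemma gam_onto:
  assumes d: "2 \<le> d" and w: "0 < Im w" "phi d w = pi"
  shows "w \<in> gam d ` {0<..}"
proof -
  note L = law_of_sines[OF w(1)]
  define a where "a = Arg (w + 1)"
  define b where "b = Arg w"
  have ph: "b + real (d - 1) * a = pi" using w(2) by (simp add: phi_def a_def b_def)
  have a0: "0 < a" "a < b" using L by (auto simp: a_def b_def)
  have da: "real d * a = real (d - 1) * a + a" using d by (simp add: of_nat_diff algebra_simps)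
  have dpi: "real d * a < pi" using ph da a0 by linarith
  define t where "t = real d * a / (pi - real d * a)"
  have t: "al d t = a" "0 < t" using al_inv[OF d a0(1) dpi] by (auto simp: t_def)
  have "gam d t = Wf d a pi" unfolding gam_def t(1) using Ef_Wf[OF d a0(1) dpi] .
  also have "\<dots> = w"
  proof -
    have e1: "pi - real (d - 1) * a = b" using ph by simp
    have e2: "pi - real d * a = b - a" using ph da by simp
    show ?thesis unfolding Wf_def e1 e2 using L by (simp add: a_def b_def)
  qed
  finally show ?thesis using t by force
qed

lemma gam_cases:
  assumes d: "2 \<le> d" and w: "w \<in> Gam d"
  shows "w = - 1 / real d \<or> (0 < Im w \<and> phi d w = pi)"
proof -
  obtain t where t: "0 \<le> t" "w = gam d t" using w by auto
  show ?thesis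
  proof (cases "t = 0")
    case True then show ?thesis using t gam0[OF d] by simp
  next
    case False then show ?thesis using t gam_pos[OF d, of t] by simp
  qed
qed

lemma Gam_real: "2 \<le> d \<Longrightarrow> complex_of_real (- 1 / real d) \<in> Gam d"
  using gam0[of d] by (metis atLeast_iff image_eqI order_refl of_real_1 of_real_divide of_real_minus of_real_of_nat_eq)

lemma translate:
  assumes d: "2 \<le> d" and w: "w \<in> Om d \<or> w \<in> Gam d \<or> w \<in> cnj ` Gam d" and c: "0 < c"
  shows "w + complex_of_real c \<in> Om d"
proof -
  have up: "v + complex_of_real c \<in> Om d" if "v \<in> Om d \<or> v \<in> Gam d" for v
  proof -
    consider "0 < Im v \<and> phi d v \<le> pi" | "Im v < 0 \<and> phi d (cnj v) < pi" | "Im v = 0 \<and> - 1 / real d \<le> Re v"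
    proof -
      { assume "v \<in> Om d" then have ?thesis using that unfolding Om_iff by (auto simp: less_imp_le) }
      moreover
      { assume "v \<in> Gam d" then have ?thesis using gam_cases[OF d] that by fastforce }
      ultimately show ?thesis using \<open>v \<in> Om d \<or> v \<in> Gam d\<close> by blast
    qed
    then show ?thesis
    proof cases
      case 1
      then have "phi d (v + complex_of_real c) < pi" using phi_shift[of v c d] c by simp
      then show ?thesis using 1 by (simp add: Om_iff)
    next
      case 2
      have "cnj (v + complex_of_real c) = cnj v + complex_of_real c" by simp
      moreover have "phi d (cnj v + complex_of_real c) < pi" using phi_shift[of "cnj v" c d] c 2 by simp
      ultimately show ?thesis using 2 by (simp add: Om_iff)
    next
      case 3
      then show ?thesis using c by (simp add: Om_iff)
    qed
  qed
  show ?thesis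
  proof (cases "w \<in> cnj ` Gam d")
    case True
    then have "cnj w \<in> Gam d" by (simp add: cnj_image_iff)
    then have "cnj w + complex_of_real c \<in> Om d" using up by blast
    then have "cnj (w + complex_of_real c) \<in> Om d" by simp
    then show ?thesis using Om_cnj by blast
  next
    case False
    then show ?thesis using up w by blast
  qed
qed

lemma frontier_Om:
  assumes d: "2 \<le> d"
  shows "frontier (Om d) = Gam d \<union> cnj ` Gam d"
proof -
  have fr: "frontier (Om d) = closure (Om d) - Om d"
    using open_Om[OF d] by (simp add: frontier_def interior_open)
  have clRe: "closure (Om d) \<subseteq> {z. - 1 / real d \<le> Re z}"
    using Om_Re[OF d] by (intro closure_minimal) (auto simp: closed_halfspace_Re_ge less_imp_le)
  have upper: "w \<in> Gam d" if w: "w \<in> closure (Om d)" "w \<notin> Om d" "0 < Im w" for w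
  proof -
    have "phi d w = pi"
    proof (rule ccontr)
      assume ne: "phi d w \<noteq> pi"
      have "\<not> phi d w < pi" using w by (simp add: Om_iff)
      then have gt: "phi d w > pi" using ne by simp
      obtain \<delta> where \<delta>: "\<delta> > 0" "\<And>v. dist v w < \<delta> \<Longrightarrow> dist (phi d v) (phi d w) < phi d w - pi"
        using phi_cont[OF w(3), of d] gt unfolding continuous_at_eps_delta by (meson diff_gt_0_iff_gt)
      obtain v where v: "v \<in> Om d" "dist v w < min \<delta> (Im w)"
        using w(1) \<delta>(1) w(3) unfolding closure_approachable by (meson min_less_iff_conj)
      have "\<bar>Im (v - w)\<bar> < Im w" using v abs_Im_le_cmod[of "v - w"] by (simp add: dist_norm)
      then have vi: "0 < Im v" by (simp add: abs_less_iff)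
      have "phi d v > pi" using \<delta>(2)[of v] v by (simp add: dist_real_def abs_less_iff)
      then show False using v vi by (simp add: Om_iff)
    qed
    then obtain t where "t \<in> {0<..}" "w = gam d t" using gam_onto[OF d w(3)] by blast
    then show ?thesis by force
  qed
  show ?thesis
  proof
    show "frontier (Om d) \<subseteq> Gam d \<union> cnj ` Gam d"
    proof
      fix w assume "w \<in> frontier (Om d)"
      then have w: "w \<in> closure (Om d)" "w \<notin> Om d" using fr by auto
      consider "0 < Im w" | "Im w < 0" | "Im w = 0" by linarith
      then show "w \<in> Gam d \<union> cnj ` Gam d"
      proof cases
        case 1 then show ?thesis using upper w by blast
      next
        case 2
        have "cnj w \<in> closure (Om d)"
          unfolding closure_approachable
        proof (intro allI impI)
          fix e :: real assume "e > 0"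
          then obtain y where "y \<in> Om d" "dist y w < e" using w(1) unfolding closure_approachable by blast
          moreover have "dist (cnj y) (cnj w) = dist y w"
            by (simp add: dist_norm complex_cnj_diff[symmetric] del: complex_cnj_diff)
          ultimately show "\<exists>y\<in>Om d. dist y (cnj w) < e" using Om_cnj by (metis complex_cnj_cnj)
        qed
        moreover have "cnj w \<notin> Om d" using w Om_cnj by blast
        ultimately have "cnj w \<in> Gam d" using upper 2 by simp
        then show ?thesis by (simp add: cnj_image_iff)
      next
        case 3
        have "- 1 / real d \<le> Re w" using clRe w by auto
        moreover have "\<not> - 1 / real d < Re w" using w 3 by (simp add: Om_iff)
        ultimately have "Re w = - 1 / real d" by simp
        then have "w = complex_of_real (- 1 / real d)" using 3 by (simp add: complex_eq_iff)
        then show ?thesis using Gam_real[OF d] by simp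
      qed
    qed
    show "Gam d \<union> cnj ` Gam d \<subseteq> frontier (Om d)"
    proof
      fix w assume w: "w \<in> Gam d \<union> cnj ` Gam d"
      have notin: "v \<notin> Om d" if "v \<in> Gam d" for v
      proof -
        have "v = - 1 / real d \<or> (0 < Im v \<and> phi d v = pi)" using gam_cases[OF d that] .
        then show ?thesis
        proof
          assume "v = - 1 / real d"
          then have "v = complex_of_real (- 1 / real d)" by simp
          then show ?thesis by (simp add: Om_iff)
        qed (simp add: Om_iff)
      qed
      have "w \<notin> Om d" using w notin[of w] notin[of "cnj w"] Om_cnj by (auto simp: cnj_image_iff)
      moreover have "w \<in> closure (Om d)"
        unfolding closure_approachable
      proof (intro allI impI)
        fix e :: real assume e: "e > 0"
        have "w + complex_of_real (e / 2) \<in> Om d" using translate[OF d _ half_gt_zero[OF e]] w by blast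
        moreover have "dist (w + complex_of_real (e / 2)) w < e" using e by (simp add: dist_norm)
        ultimately show "\<exists>y\<in>Om d. dist y w < e" by blast
      qed
      ultimately show "w \<in> frontier (Om d)" using fr by blast
    qed
  qed
qed

lemma sf_norm_ge:
  assumes "2 \<le> norm w"
  shows "norm w \<le> norm (sf_map d w)"
proof -
  have "norm w - norm (1::complex) \<le> norm (w + 1)" by (rule norm_diff_ineq)
  then have "1 \<le> norm (w + 1)" using assms by simp
  then have "1 \<le> norm (w + 1) ^ (d - 1)" by (rule one_le_power)
  then have "norm w * 1 \<le> norm w * norm (w + 1) ^ (d - 1)" by (intro mult_left_mono) auto
  then show ?thesis by (simp add: sf_map_def norm_mult norm_power)
qed

lemma Gam_bij:
  assumes d: "2 \<le> d"
  shows "bij_betw (sf_map d) (Gam d) (complex_of_real ` {.. - (r_sf d ^ d)})"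
proof -
  define H where "H t = - Re (sf_map d (gam d t))" for t
  have R: "0 < r_sf d ^ d" using r_sf_pow(2)[OF d] by simp
  have g0: "gam d 0 = complex_of_real (- 1 / real d)" using gam0[OF d] by simp
  have sf0: "sf_map d (gam d 0) = - complex_of_real (r_sf d ^ d)"
    unfolding g0 sf_real Pf_start[OF d] by simp
  have H0: "H 0 = r_sf d ^ d" unfolding H_def sf0 by simp
  have Hp: "H t = Mf d pi (al d t)" "sf_map d (gam d t) = - complex_of_real (H t)" if "0 < t" for t
    using gam_pos[OF d that] by (auto simp: H_def)
  have hval: "sf_map d (gam d t) = - complex_of_real (H t)" if "0 \<le> t" for t
  proof (cases "t = 0")
    case True then show ?thesis using sf0 H0 by simp
  next
    case False then show ?thesis using Hp(2)[of t] that by simp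
  qed
  have Hmono: "H s < H t" if "0 < s" "s < t" for s t
  proof -
    note A = al_props[OF d, of s] al_props[OF d, of t]
    have "al d s < al d t" using al_mono[OF d _ that(2)] that by simp
    then have "Mf d pi (al d s) < Mf d pi (al d t)"
      using Mf_strict_mono[OF d pi_gt_zero order_refl, of "al d s" "al d t"] A that by auto
    then show ?thesis using Hp that by simp
  qed
  have csf: "continuous_on UNIV (sf_map d)" unfolding sf_map_def[abs_def] by (intro continuous_intros)
  have cg: "continuous_on {0..} (\<lambda>t. sf_map d (gam d t))"
    by (rule continuous_on_compose2[OF csf gam_cont[OF d]]) auto
  have Hcont: "continuous_on {0..} H" unfolding H_def[abs_def] using cg by (intro continuous_intros)
  have H0less: "H 0 < H t" if t: "0 < t" for t
  proof -
    have "(H \<longlongrightarrow> H 0) (at 0 within {0..})" using Hcont by (simp add: continuous_on_def)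
    then have lim: "(H \<longlongrightarrow> H 0) (at_right 0)" by (simp add: at_within_Ici_at_right)
    have ev: "eventually (\<lambda>s. H s \<le> H (t / 2)) (at_right 0)"
      unfolding eventually_at_right_field
      by (rule exI[of _ "t / 2"]) (use t Hmono in \<open>auto intro: less_imp_le\<close>)
    have "H 0 \<le> H (t / 2)" by (rule tendsto_upperbound[OF lim ev]) simp
    also have "\<dots> < H t" using Hmono[of "t/2" t] t by simp
    finally show ?thesis .
  qed
  have Hstrict: "H s < H t" if "0 \<le> s" "s < t" for s t
    using that Hmono H0less by (cases "s = 0") auto
  have Hge: "r_sf d ^ d \<le> H t" if "0 \<le> t" for t
    using that H0less H0 by (cases "t = 0") (auto intro: less_imp_le)
  have Hnorm: "H t = norm (sf_map d (gam d t))" if "0 \<le> t" for t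
    using hval[OF that] Hge[OF that] R by simp
  have inj: "inj_on (sf_map d) (Gam d)"
  proof
    fix w1 w2 assume w1: "w1 \<in> Gam d" and w2: "w2 \<in> Gam d" and e: "sf_map d w1 = sf_map d w2"
    obtain s where s: "0 \<le> s" "w1 = gam d s" using w1 by auto
    obtain t where t: "0 \<le> t" "w2 = gam d t" using w2 by auto
    have "H s = H t" using e hval[OF s(1)] hval[OF t(1)] s t by simp
    then have "s = t"
    proof -
      assume eq: "H s = H t"
      show "s = t"
      proof (rule ccontr)
        assume "s \<noteq> t"
        then consider "s < t" | "t < s" by linarith
        then show False using Hstrict[of s t] Hstrict[of t s] s t eq by (cases; auto)
      qed
    qed
    then show "w1 = w2" using s t by simp
  qed
  have img1: "sf_map d ` Gam d \<subseteq> complex_of_real ` {.. - (r_sf d ^ d)}"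
  proof
    fix z assume "z \<in> sf_map d ` Gam d"
    then obtain t where t: "0 \<le> t" "z = sf_map d (gam d t)" by auto
    then have "z = complex_of_real (- H t)" using hval by simp
    moreover have "- H t \<le> - (r_sf d ^ d)" using Hge[OF t(1)] by simp
    ultimately show "z \<in> complex_of_real ` {.. - (r_sf d ^ d)}" by auto
  qed
  have img2: "complex_of_real ` {.. - (r_sf d ^ d)} \<subseteq> sf_map d ` Gam d"
  proof
    fix z assume "z \<in> complex_of_real ` {.. - (r_sf d ^ d)}"
    then obtain y where y: "y \<le> - (r_sf d ^ d)" "z = complex_of_real y" by auto
    have "eventually (\<lambda>t. max 2 (- y) \<le> norm (gam d t)) at_top"
      using gam_norm_inf[OF d] unfolding filterlim_at_top by blast
    then obtain N where N: "\<And>t. N \<le> t \<Longrightarrow> max 2 (- y) \<le> norm (gam d t)"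
      unfolding eventually_at_top_linorder by blast
    define T where "T = max N 0"
    have T: "0 \<le> T" "max 2 (- y) \<le> norm (gam d T)" using N by (auto simp: T_def)
    have "- y \<le> norm (gam d T)" using T by simp
    also have "\<dots> \<le> H T" using sf_norm_ge[of "gam d T" d] T Hnorm[OF T(1)] by simp
    finally have HT: "- y \<le> H T" .
    have H0y: "H 0 \<le> - y" using y H0 by simp
    have "continuous_on {0..T} H" using Hcont by (rule continuous_on_subset) auto
    then obtain t where t: "0 \<le> t" "t \<le> T" "H t = - y"
      using IVT'[of H 0 "- y" T] HT H0y T by auto
    have "sf_map d (gam d t) = z" using hval[OF t(1)] t y by simp
    then show "z \<in> sf_map d ` Gam d" using t by force
  qed
  show ?thesis unfolding bij_betw_def using inj img1 img2 by blast
qed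

lemma slit_starlike:
  assumes R: "0 < R"
  shows "starlike (UNIV - complex_of_real ` {.. - R})"
  unfolding starlike_def
proof (intro bexI ballI)
  show "0 \<in> UNIV - complex_of_real ` {.. - R}" using R by (auto simp: of_real_image_iff)
  fix x assume x: "x \<in> UNIV - complex_of_real ` {.. - R}"
  show "closed_segment 0 x \<subseteq> UNIV - complex_of_real ` {.. - R}"
  proof
    fix z assume "z \<in> closed_segment 0 x"
    then obtain u where u: "0 \<le> u" "u \<le> 1" "z = u *\<^sub>R x" by (auto simp: in_segment)
    show "z \<in> UNIV - complex_of_real ` {.. - R}"
    proof (intro DiffI UNIV_I notI)
      assume "z \<in> complex_of_real ` {.. - R}"
      then have zi: "Im z = 0" "Re z \<le> - R" by (auto simp: of_real_image_iff)
      then have "u * Re x \<le> - R" "u * Im x = 0" using u by auto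
      then have u0: "u \<noteq> 0" using R by auto
      then have xi: "Im x = 0" using \<open>u * Im x = 0\<close> by simp
      have "Re x \<le> - R"
      proof (rule ccontr)
        assume "\<not> Re x \<le> - R"
        then have gt: "- R < Re x" by simp
        show False
        proof (cases "Re x < 0")
          case True
          have "1 * Re x \<le> u * Re x" using u True by (intro mult_right_mono_neg) auto
          then show False using gt \<open>u * Re x \<le> - R\<close> by simp
        next
          case False
          then have "0 \<le> u * Re x" using u by simp
          then show False using R \<open>u * Re x \<le> - R\<close> by simp
        qed
      qed
      then show False using x xi by (auto simp: of_real_image_iff)
    qed
  qed
qed

theorem lemma9p11:
  fixes d :: nat
  assumes "d \<ge> 2"
  shows "\<exists>(\<Omega> :: complex set) (\<gamma> :: real \<Rightarrow> complex).
     open \<Omega> \<and> connected \<Omega> \<and> simply_connected \<Omega> \<and>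
     (\<forall>x::real. x > - 1 / real d \<longrightarrow> complex_of_real x \<in> \<Omega>) \<and>
     continuous_on {0..} \<gamma> \<and>
     \<gamma> 0 = complex_of_real (- 1 / real d) \<and>
     (\<forall>t>0. Im (\<gamma> t) > 0) \<and>
     filterlim (\<lambda>t. norm (\<gamma> t)) at_top at_top \<and>
     frontier \<Omega> = \<gamma> ` {0..} \<union> cnj ` (\<gamma> ` {0..}) \<and>
     bij_betw (sf_map d) \<Omega>
        (UNIV - complex_of_real ` {.. - (r_sf d ^ d)}) \<and>
     bij_betw (sf_map d) (\<gamma> ` {0..}) (complex_of_real ` {.. - (r_sf d ^ d)}) \<and>
     (\<forall>w \<in> \<Omega> \<union> frontier \<Omega>. \<forall>c::real. c > 0 \<longrightarrow> w + complex_of_real c \<in> \<Omega>)"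
proof -
  have d: "2 \<le> d" using assms by simp
  note B = Om_bij[OF d]
  have inj: "inj_on (sf_map d) (Om d)" and img: "sf_map d ` Om d = UNIV - complex_of_real ` {.. - (r_sf d ^ d)}"
    using B by (auto simp: bij_betw_def)
  have cont: "continuous_on (Om d) (sf_map d)" unfolding sf_map_def[abs_def] by (intro continuous_intros)
  have "Om d homeomorphic (sf_map d ` Om d)"
    by (rule invariance_of_domain_homeomorphic[OF open_Om[OF d] cont _ inj]) simp
  then have hom: "Om d homeomorphic (UNIV - complex_of_real ` {.. - (r_sf d ^ d)})" using img by simp
  have R: "0 < r_sf d ^ d" using r_sf_pow(2)[OF d] by simp
  have sc: "simply_connected (Om d)"
    using homeomorphic_simply_connected_eq[OF hom] starlike_imp_simply_connected[OF slit_starlike[OF R]] by simp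
  have conn: "connected (Om d)" using simply_connected_imp_connected[OF sc] .
  have ray: "\<forall>x::real. x > - 1 / real d \<longrightarrow> complex_of_real x \<in> Om d" by (simp add: Om_iff)
  have g0: "gam d 0 = complex_of_real (- 1 / real d)" using gam0[OF d] by simp
  have gi: "\<forall>t>0. Im (gam d t) > 0" using gam_pos(2)[OF d] by blast
  have tr: "\<forall>w \<in> Om d \<union> frontier (Om d). \<forall>c::real. c > 0 \<longrightarrow> w + complex_of_real c \<in> Om d"
    using translate[OF d] frontier_Om[OF d] by blast
  show ?thesis
    apply (rule exI[of _ "Om d"], rule exI[of _ "gam d"])
    using open_Om[OF d] conn sc ray gam_cont[OF d] g0 gi gam_norm_inf[OF d] frontier_Om[OF d] B Gam_bij[OF d] tr
    by blast
qed

end
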